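(* Let $d\ge1$ and let $(\boldsymbol X_1,Y_1)=(X_{1,1},\ldots,X_{1,d},Y_1)$ be a random vector with continuous marginals and $(d+1)$-dimensional copula $C_1$. Fix $\boldsymbol\alpha\in[0,1)^d$ with $C_1(\boldsymbol\alpha,1)<1$. If $C_1$ is $\mathrm{LTD}^1_{d+1}$, then for all $\beta\in(0,1)$, $$\mathrm{VaR}_\beta(Y_1)\le\mathrm{VCoVaR}_{\boldsymbol\alpha,\beta}(Y_1|\boldsymbol X_1)\quad\text{and}\quad \mathrm{ES}_\beta(Y_1)\le\mathrm{VCoES}_{\boldsymbol\alpha,\beta}(Y_1|\boldsymbol X_1).$$
   Context: $C(\boldsymbol{\alpha},v)=C(\alpha_1,\ldots,\alpha_d,v)$. $F^{-1}(t)=\inf\{x:F(x)\ge t\}$, $\mathrm{VaR}_t(Z)=F_Z^{-1}(t)$, $\mathrm{ES}_\beta(Z)=\frac1{1-\beta}\int_\beta^1\mathrm{VaR}_t(Z)\,dt$. $\mathrm{VCoVaR}_{\boldsymbol\alpha,t}(Y_1|\boldsymbol X_1)$ is the $t$-quantile of the conditional distribution of $Y_1$ given $\{\exists\, i: X_{1,i}>\mathrm{VaR}_{\alpha_i}(X_{1,i})\}$; $\mathrm{VCoES}_{\boldsymbol\alpha,\beta}(Y_1|\boldsymbol X_1)=\frac1{1-\beta}\int_\beta^1\mathrm{VCoVaR}_{\boldsymbol\alpha,t}(Y_1|\boldsymbol X_1)\,dt$. A $(d+1)$-dimensional copula $C$ is $\mathrm{LTD}^1_{d+1}$ if $C(u_1,\ldots,u_d,v)/v$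 is nonincreasing in $v\in(0,1]$ for all $u_1,\ldots,u_d$ (equivalently, for $(U_1,\ldots,U_d,V)\sim C$, $P(U_1\le u_1,\ldots,U_d\le u_d\mid V\le v)$ is nonincreasing in $v$). *)

theory Defs
  imports "HOL-Probability.Probability"
begin

text \<open>A random vector of dimension n+1 is represented by Z :: nat => 'a => real, with
  components Z 0, ..., Z n; points of [0,1]^n are functions w :: nat => real, only the
  coordinates i < n being relevant.\<close>

definition unit_box :: "nat \<Rightarrow> (nat \<Rightarrow> real) set" where
  "unit_box n = {w. \<forall>i<n. 0 \<le> w i \<and> w i \<le> 1}"

definition copula :: "nat \<Rightarrow> ((nat \<Rightarrow> real) \<Rightarrow> real) \<Rightarrow> bool" where
  "copula n C \<longleftrightarrow>
     (\<forall>w w'. (\<forall>i<n. w i = w' i) \<longrightarrow> C w = C w') \<and>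
     (\<forall>w\<in>unit_box n. (\<exists>i<n. w i = 0) \<longrightarrow> C w = 0) \<and>
     (\<forall>w\<in>unit_box n. \<forall>k<n. (\<forall>i<n. i \<noteq> k \<longrightarrow> w i = 1) \<longrightarrow> C w = w k) \<and>
     (\<forall>a\<in>unit_box n. \<forall>b\<in>unit_box n. (\<forall>i<n. a i \<le> b i) \<longrightarrow>
        0 \<le> (\<Sum>S\<in>Pow {..<n}. (-1) ^ card S * C (\<lambda>i. if i \<in> S then a i else b i)))"

definition is_copula_of :: "'a measure \<Rightarrow> (nat \<Rightarrow> 'a \<Rightarrow> real) \<Rightarrow> nat \<Rightarrow> ((nat \<Rightarrow> real) \<Rightarrow> real) \<Rightarrow> bool" where
  "is_copula_of M Z d C \<longleftrightarrow> copula (Suc d) C \<and>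
     (\<forall>x. measure M {\<omega>\<in>space M. \<forall>i\<le>d. Z i \<omega> \<le> x i}
          = C (\<lambda>i. cdf (distr M borel (Z i)) (x i)))"

definition LTD1 :: "nat \<Rightarrow> ((nat \<Rightarrow> real) \<Rightarrow> real) \<Rightarrow> bool" where
  "LTD1 d C \<longleftrightarrow> (\<forall>u\<in>unit_box d. \<forall>v v'. 0 < v \<longrightarrow> v \<le> v' \<longrightarrow> v' \<le> 1 \<longrightarrow>
      C (u(d := v')) / v' \<le> C (u(d := v)) / v)"

text \<open>Generalised inverse F^{-1}(t) = inf {x. F x >= t}, in the extended reals
  (so that inf of the empty set is +infinity and inf of all reals is -infinity).\<close>
definition quantile :: "(real \<Rightarrow> real) \<Rightarrow> real \<Rightarrow> ereal" where
  "quantile F t = Inf {ereal x | x. t \<le> F x}"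

definition VaR :: "'a measure \<Rightarrow> ('a \<Rightarrow> real) \<Rightarrow> real \<Rightarrow> ereal" where
  "VaR M X t = quantile (cdf (distr M borel X)) t"

definition ext_set_integral :: "real set \<Rightarrow> (real \<Rightarrow> ereal) \<Rightarrow> ereal" where
  "ext_set_integral S f =
     enn2ereal (\<integral>\<^sup>+ t. indicator S t * e2ennreal (f t) \<partial>lborel)
     - enn2ereal (\<integral>\<^sup>+ t. indicator S t * e2ennreal (- f t) \<partial>lborel)"

definition ES :: "'a measure \<Rightarrow> ('a \<Rightarrow> real) \<Rightarrow> real \<Rightarrow> ereal" where
  "ES M X \<beta> = ext_set_integral {\<beta>..1} (VaR M X) / ereal (1 - \<beta>)"

text \<open>Stress event: some X_i = Z i (i < d) exceeds its VaR at level alpha_i.\<close>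
definition stress_event :: "'a measure \<Rightarrow> (nat \<Rightarrow> 'a \<Rightarrow> real) \<Rightarrow> nat \<Rightarrow> (nat \<Rightarrow> real) \<Rightarrow> 'a set" where
  "stress_event M Z d \<alpha> = {\<omega>\<in>space M. \<exists>i<d. VaR M (Z i) (\<alpha> i) < ereal (Z i \<omega>)}"

definition cond_cdf :: "'a measure \<Rightarrow> (nat \<Rightarrow> 'a \<Rightarrow> real) \<Rightarrow> nat \<Rightarrow> (nat \<Rightarrow> real) \<Rightarrow> real \<Rightarrow> real" where
  "cond_cdf M Z d \<alpha> y =
     measure M ({\<omega>\<in>space M. Z d \<omega> \<le> y} \<inter> stress_event M Z d \<alpha>)
     / measure M (stress_event M Z d \<alpha>)"

definition VCoVaR :: "'a measure \<Rightarrow> (nat \<Rightarrow> 'a \<Rightarrow> real) \<Rightarrow> nat \<Rightarrow> (nat \<Rightarrow> real) \<Rightarrow> real \<Rightarrow> ereal" where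
  "VCoVaR M Z d \<alpha> t = quantile (cond_cdf M Z d \<alpha>) t"

definition VCoES :: "'a measure \<Rightarrow> (nat \<Rightarrow> 'a \<Rightarrow> real) \<Rightarrow> nat \<Rightarrow> (nat \<Rightarrow> real) \<Rightarrow> real \<Rightarrow> ereal" where
  "VCoES M Z d \<alpha> \<beta> = ext_set_integral {\<beta>..1} (VCoVaR M Z d \<alpha>) / ereal (1 - \<beta>)"

end

theory Submission
  imports Defs
begin

lemma quantile_mono:
  assumes "\<And>x. G x \<le> F x"
  shows "quantile F t \<le> quantile G t"
  unfolding quantile_def
  by (rule Inf_superset_mono) (auto intro: order_trans[OF _ assms])

lemma ext_set_integral_mono:
  assumes "\<And>t. f t \<le> g t"
  shows "ext_set_integral S f \<le> ext_set_integral S g"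
  unfolding ext_set_integral_def
proof (rule ereal_minus_mono)
  show "enn2ereal (\<integral>\<^sup>+ t. indicator S t * e2ennreal (f t) \<partial>lborel)
     \<le> enn2ereal (\<integral>\<^sup>+ t. indicator S t * e2ennreal (g t) \<partial>lborel)"
    by (intro less_eq_ennreal.rep_eq[THEN iffD1] nn_integral_mono mult_left_mono e2ennreal_mono assms) auto
  show "enn2ereal (\<integral>\<^sup>+ t. indicator S t * e2ennreal (- g t) \<partial>lborel)
     \<le> enn2ereal (\<integral>\<^sup>+ t. indicator S t * e2ennreal (- f t) \<partial>lborel)"
    by (intro less_eq_ennreal.rep_eq[THEN iffD1] nn_integral_mono mult_left_mono e2ennreal_mono) (auto simp: assms)
qed

lemma cdf_distr_eq:
  assumes "prob_space M" "X \<in> borel_measurable M"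
  shows "cdf (distr M borel X) y = measure M {\<omega>\<in>space M. X \<omega> \<le> y}"
  using assms unfolding cdf_def
  by (subst measure_distr) (auto intro: arg_cong[where f="measure M"])

lemma VaR_zero_less:
  "VaR M X 0 < ereal (X \<omega>)" if "prob_space M" "X \<in> borel_measurable M"
proof -
  interpret prob_space M by fact
  have "VaR M X 0 \<le> ereal (X \<omega> - 1)"
    unfolding VaR_def quantile_def
    by (rule Inf_lower) (auto intro: finite_borel_measure.cdf_nonneg[OF real_distribution.finite_borel_measure_M[OF real_distribution_distr]] that)
  also have "\<dots> < ereal (X \<omega>)" by simp
  finally show ?thesis .
qed

lemma VaR_real:
  assumes "prob_space M" "X \<in> borel_measurable M"
    and cont: "continuous_on UNIV (cdf (distr M borel X))" and a: "0 < a" "a < 1"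
  shows "\<exists>q. VaR M X a = ereal q \<and> cdf (distr M borel X) q = a"
proof -
  interpret prob_space M by fact
  define F where "F = cdf (distr M borel X)"
  have rd: "real_distribution (distr M borel X)" using assms(2) by auto
  have top: "(F \<longlongrightarrow> 1) at_top" unfolding F_def by (rule real_distribution.cdf_lim_at_top_prob[OF rd])
  have bot: "(F \<longlongrightarrow> 0) at_bot" unfolding F_def by (rule finite_borel_measure.cdf_lim_at_bot[OF real_distribution.finite_borel_measure_M[OF rd]])
  define A where "A = {x. a \<le> F x}"
  have "eventually (\<lambda>x. F x > a) at_top" using top a by (auto intro: order_tendstoD)
  then obtain x0 where "F x0 > a" by (auto simp: eventually_at_top_linorder)
  then have Ane: "A \<noteq> {}" unfolding A_def by (metis empty_iff less_imp_le mem_Collect_eq)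
  have "eventually (\<lambda>x. F x < a) at_bot" using bot a by (auto intro: order_tendstoD)
  then obtain b where b: "\<And>x. x \<le> b \<Longrightarrow> F x < a" by (auto simp: eventually_at_bot_linorder)
  have Ab: "\<And>x. x \<in> A \<Longrightarrow> b < x" unfolding A_def using b by (metis mem_Collect_eq not_le)
  then have bdd: "bdd_below A" by (meson bdd_below.I less_imp_le)
  have contF: "continuous_on UNIV F" using cont F_def by simp
  have cl: "closed A" unfolding A_def
    by (rule closed_Collect_le) (auto intro: continuous_on_subset[OF contF])
  define q where "q = Inf A"
  have qA: "q \<in> A" unfolding q_def using closed_contains_Inf[OF Ane bdd cl] .
  have "b < q" using Ab qA by blast
  have "F b \<le> a" using b by (simp add: less_imp_le)
  moreover have "a \<le> F q" using qA A_def by simp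
  ultimately obtain x where x: "b \<le> x" "x \<le> q" "F x = a"
    using IVT'[of F b a q] \<open>b < q\<close> continuous_on_subset[OF contF] by force
  then have "x \<in> A" unfolding A_def by simp
  then have "q \<le> x" unfolding q_def using bdd by (simp add: cInf_lower)
  then have Fq: "F q = a" using x by simp
  have "VaR M X a = Inf (ereal ` A)"
    unfolding VaR_def quantile_def A_def F_def by (simp add: setcompr_eq_image)
  also have "\<dots> = ereal q" unfolding q_def using ereal_Inf'[OF bdd Ane] by simp
  finally show ?thesis using Fq F_def by blast
qed


lemma meas_all:
  fixes f :: "nat \<Rightarrow> 'a \<Rightarrow> real"
  assumes "\<And>i. i < d \<Longrightarrow> f i \<in> borel_measurable M"
  shows "{\<omega>\<in>space M. \<forall>i<d. f i \<omega> \<le> c i} \<in> sets M"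
proof -
  have "{\<omega>\<in>space M. \<forall>i<d. f i \<omega> \<le> c i} = {\<omega>\<in>space M. \<forall>i\<in>{..<d}. f i \<omega> \<le> c i}" by auto
  also have "\<dots> \<in> sets M"
    by (rule sets.sets_Collect_finite_All) (auto intro!: borel_measurable_le assms)
  finally show ?thesis .
qed

lemma key_ineq:
  fixes M :: "'a measure" and Z :: "nat \<Rightarrow> 'a \<Rightarrow> real" and d :: nat
    and C :: "(nat \<Rightarrow> real) \<Rightarrow> real" and \<alpha> :: "nat \<Rightarrow> real"
  assumes "prob_space M"
    and meas: "\<forall>i\<le>d. Z i \<in> borel_measurable M"
    and cont: "\<forall>i\<le>d. continuous_on UNIV (cdf (distr M borel (Z i)))"
    and cop: "is_copula_of M Z d C"
    and al: "\<forall>i<d. 0 \<le> \<alpha> i \<and> \<alpha> i < 1"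
    and ltd: "LTD1 d C"
  shows "cond_cdf M Z d \<alpha> y \<le> cdf (distr M borel (Z d)) y"
proof -
  interpret prob_space M by fact
  define F where "F = cdf (distr M borel (Z d))"
  have rd: "real_distribution (distr M borel (Z d))" using meas by auto
  have Fnn: "\<And>x. 0 \<le> F x" unfolding F_def
    by (rule finite_borel_measure.cdf_nonneg[OF real_distribution.finite_borel_measure_M[OF rd]])
  have F1: "\<And>x. F x \<le> 1" unfolding F_def by (rule real_distribution.cdf_bounded_prob[OF rd])
  have Fmono: "\<And>x y. x \<le> y \<Longrightarrow> F x \<le> F y" unfolding F_def
    by (rule finite_borel_measure.cdf_nondecreasing[OF real_distribution.finite_borel_measure_M[OF rd]])
  have top: "(F \<longlongrightarrow> 1) at_top" unfolding F_def by (rule real_distribution.cdf_lim_at_top_prob[OF rd])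
  have Feq: "\<And>x. F x = prob {\<omega>\<in>space M. Z d \<omega> \<le> x}"
    unfolding F_def using cdf_distr_eq[OF \<open>prob_space M\<close>] meas by auto
  have Zd: "Z d \<in> borel_measurable M" using meas by auto
  show ?thesis
  proof (cases "\<exists>i<d. \<alpha> i = 0")
    case True
    then obtain i where i: "i < d" "\<alpha> i = 0" by blast
    have "stress_event M Z d \<alpha> = space M"
      unfolding stress_event_def using i VaR_zero_less[OF \<open>prob_space M\<close>, of "Z i"] meas by auto
    then show ?thesis unfolding cond_cdf_def F_def[symmetric] Feq
      by (simp add: Int_commute Int_absorb1 prob_space)
  next
    case False
    then have apos: "\<forall>i<d. 0 < \<alpha> i" using al by force
    have "\<forall>i<d. \<exists>q. VaR M (Z i) (\<alpha> i) = ereal q \<and> cdf (distr M borel (Z i)) q = \<alpha> i"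
      using VaR_real[OF \<open>prob_space M\<close>] meas cont apos al by auto
    then obtain q where q: "\<And>i. i < d \<Longrightarrow> VaR M (Z i) (\<alpha> i) = ereal (q i) \<and> cdf (distr M borel (Z i)) (q i) = \<alpha> i"
      by metis
    define Sc where "Sc = {\<omega>\<in>space M. \<forall>i<d. Z i \<omega> \<le> q i}"
    define H where "H y = {\<omega>\<in>space M. (\<forall>i<d. Z i \<omega> \<le> q i) \<and> Z d \<omega> \<le> y}" for y
    define h where "h y = prob (H y)" for y
    define c where "c = prob Sc"
    have S_eq: "stress_event M Z d \<alpha> = space M - Sc"
      unfolding stress_event_def Sc_def using q by (auto simp: not_le)
    have measZ: "\<And>i. i \<le> d \<Longrightarrow> Z i \<in> borel_measurable M" using meas by auto
    have Sc_sets: "Sc \<in> sets M" unfolding Sc_def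
      by (rule meas_all) (auto intro: measZ)
    have Y_sets: "\<And>y. {\<omega>\<in>space M. Z d \<omega> \<le> y} \<in> sets M"
      using Zd by measurable
    have H_sets: "\<And>y. H y \<in> sets M"
    proof -
      fix y
      have "H y = Sc \<inter> {\<omega>\<in>space M. Z d \<omega> \<le> y}" unfolding H_def Sc_def by auto
      then show "H y \<in> sets M" using Sc_sets Y_sets by auto
    qed
    have hC: "h y = C (\<alpha>(d := F y))" for y
    proof -
      define x where "x = (\<lambda>i. if i < d then q i else y)"
      have "H y = {\<omega>\<in>space M. \<forall>i\<le>d. Z i \<omega> \<le> x i}"
        unfolding H_def x_def by (auto simp: le_less)
      then have "h y = C (\<lambda>i. cdf (distr M borel (Z i)) (x i))"
        using cop unfolding h_def is_copula_of_def by simp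
      also have "\<dots> = C (\<alpha>(d := F y))"
      proof -
        have cc: "\<forall>w w'. (\<forall>i<Suc d. w i = w' i) \<longrightarrow> C w = C w'"
          using cop unfolding is_copula_of_def copula_def by blast
        show ?thesis
          by (rule cc[rule_format]) (auto simp: x_def q F_def less_Suc_eq)
      qed
      finally show ?thesis .
    qed
    have key: "F y * c \<le> h y"
    proof (cases "F y = 0")
      case True then show ?thesis by (simp add: h_def)
    next
      case False
      then have Fy: "0 < F y" using Fnn[of y] by simp
      define r where "r = h y / F y"
      have ub: "c \<le> F n * r + (1 - F n)" if "y \<le> n" for n
      proof -
        have "Sc \<subseteq> H n \<union> (space M - {\<omega>\<in>space M. Z d \<omega> \<le> n})"
          unfolding Sc_def H_def by auto
        then have "c \<le> prob (H n \<union> (space M - {\<omega>\<in>space M. Z d \<omega> \<le> n}))"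
          unfolding c_def by (rule finite_measure_mono) (use H_sets Y_sets in auto)
        also have "\<dots> \<le> h n + prob (space M - {\<omega>\<in>space M. Z d \<omega> \<le> n})"
          unfolding h_def by (rule measure_Un_le) (use H_sets Y_sets in auto)
        also have "prob (space M - {\<omega>\<in>space M. Z d \<omega> \<le> n}) = 1 - F n"
          using prob_compl[OF Y_sets[of n]] Feq[of n] by simp
        also have "h n \<le> F n * r"
        proof -
          have Fn: "0 < F n" "F y \<le> F n" using Fy Fmono[OF that] by auto
          have "\<alpha> \<in> unit_box d" unfolding unit_box_def using al by (auto simp: less_imp_le)
          then have "C (\<alpha>(d := F n)) / F n \<le> C (\<alpha>(d := F y)) / F y"
            using ltd Fy Fn F1 unfolding LTD1_def by blast
          then have "h n / F n \<le> r" unfolding r_def hC .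
          then show ?thesis using Fn by (simp add: field_simps)
        qed
        finally show ?thesis by simp
      qed
      have lim: "((\<lambda>n. F n * r + (1 - F n)) \<longlongrightarrow> 1 * r + (1 - 1)) at_top"
        by (intro tendsto_intros top)
      have ev: "eventually (\<lambda>n. c \<le> F n * r + (1 - F n)) at_top"
        by (rule eventually_at_top_linorderI[of y]) (rule ub)
      have "c \<le> 1 * r + (1 - 1)"
        by (rule tendsto_le[OF trivial_limit_at_top_linorder lim tendsto_const ev])
      then have "c \<le> r" by simp
      then show ?thesis unfolding r_def using Fy by (simp add: field_simps)
    qed
    have cS: "prob (stress_event M Z d \<alpha>) = 1 - c"
      unfolding S_eq c_def by (rule prob_compl[OF Sc_sets])
    have num: "prob ({\<omega>\<in>space M. Z d \<omega> \<le> y} \<inter> stress_event M Z d \<alpha>) = F y - h y"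
    proof -
      have "{\<omega>\<in>space M. Z d \<omega> \<le> y} \<inter> stress_event M Z d \<alpha> = {\<omega>\<in>space M. Z d \<omega> \<le> y} - H y"
        unfolding S_eq Sc_def H_def by auto
      moreover have "H y \<subseteq> {\<omega>\<in>space M. Z d \<omega> \<le> y}" unfolding H_def by auto
      ultimately show ?thesis unfolding h_def Feq
        using finite_measure_Diff[OF Y_sets H_sets] by simp
    qed
    show ?thesis
    proof (cases "c = 1")
      case True
      then show ?thesis unfolding cond_cdf_def cS F_def[symmetric] using Fnn by simp
    next
      case False
      have "c \<le> 1" unfolding c_def by simp
      with False have pos: "0 < 1 - c" by simp
      have "F y - h y \<le> F y * (1 - c)" using key by (simp add: algebra_simps)
      then show ?thesis unfolding cond_cdf_def cS num F_def[symmetric] using pos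
        by (simp add: divide_le_eq)
    qed
  qed
qed

theorem corollary4p4:
  fixes M :: "'a measure" and Z :: "nat \<Rightarrow> 'a \<Rightarrow> real" and d :: nat
    and C :: "(nat \<Rightarrow> real) \<Rightarrow> real" and \<alpha> :: "nat \<Rightarrow> real"
  assumes "prob_space M"
    and "d \<ge> 1"
    and "\<forall>i\<le>d. Z i \<in> borel_measurable M"
    and "\<forall>i\<le>d. continuous_on UNIV (cdf (distr M borel (Z i)))"
    and "is_copula_of M Z d C"
    and "\<forall>i<d. 0 \<le> \<alpha> i \<and> \<alpha> i < 1"
    and "C (\<alpha>(d := 1)) < 1"
    and "LTD1 d C"
  shows "\<forall>\<beta>\<in>{0<..<1}. VaR M (Z d) \<beta> \<le> VCoVaR M Z d \<alpha> \<beta>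
                     \<and> ES M (Z d) \<beta> \<le> VCoES M Z d \<alpha> \<beta>"
proof -
  have pt: "VaR M (Z d) t \<le> VCoVaR M Z d \<alpha> t" for t
    unfolding VaR_def VCoVaR_def
    by (rule quantile_mono, rule key_ineq) (use assms in auto)
  show ?thesis
  proof
    fix \<beta> :: real assume "\<beta> \<in> {0<..<1}"
    then have "0 < ereal (1 - \<beta>)" by simp
    then show "VaR M (Z d) \<beta> \<le> VCoVaR M Z d \<alpha> \<beta> \<and> ES M (Z d) \<beta> \<le> VCoES M Z d \<alpha> \<beta>"
      unfolding ES_def VCoES_def using pt
      by (auto intro!: ereal_divide_right_mono ext_set_integral_mono)
  qed
qed

end
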